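(* Let $S$ be a finite semigroup. The following are equivalent: (i) $\mathbb{N}\times S$ has only countably many subsemigroups; (ii) $\mathbb{N}\times S$ has only countably many pairwise non-isomorphic subsemigroups; (iii) $S$ is a union of groups (i.e. every element of $S$ lies in some subgroup of $S$).
   Context: $\mathbb{N}=\{1,2,3,\dots\}$ is the free monogenic semigroup (positive integers under addition); $\mathbb{N}\times S$ is the direct product with componentwise operation. *)

theory Defs
  imports Main "HOL-Library.Countable_Set"
begin

text \<open>The positive integers N = {1,2,...} are represented by nat with 1 \<le> n.
  The semigroup N \<times> S has componentwise operation.\<close>

definition NS_mult :: "nat \<times> 'a::semigroup_mult \<Rightarrow> nat \<times> 'a \<Rightarrow> nat \<times> 'a" where
  "NS_mult p q = (fst p + fst q, snd p * snd q)"

definition subsemigroup_NS :: "(nat \<times> 'a::semigroup_mult) set \<Rightarrow> bool" where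
  "subsemigroup_NS T \<longleftrightarrow> T \<subseteq> {p. 1 \<le> fst p} \<and> T \<noteq> {} \<and>
     (\<forall>x\<in>T. \<forall>y\<in>T. NS_mult x y \<in> T)"

definition iso_NS :: "(nat \<times> 'a::semigroup_mult) set \<Rightarrow> (nat \<times> 'a) set \<Rightarrow> bool" where
  "iso_NS T1 T2 \<longleftrightarrow> (\<exists>f. bij_betw f T1 T2 \<and>
     (\<forall>x\<in>T1. \<forall>y\<in>T1. f (NS_mult x y) = NS_mult (f x) (f y)))"

definition subgroup_of_sg :: "'a::semigroup_mult set \<Rightarrow> bool" where
  "subgroup_of_sg G \<longleftrightarrow> (\<forall>x\<in>G. \<forall>y\<in>G. x * y \<in> G) \<and>
     (\<exists>e\<in>G. (\<forall>g\<in>G. e * g = g \<and> g * e = g) \<and> (\<forall>g\<in>G. \<exists>h\<in>G. g * h = e \<and> h * g = e))"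

definition union_of_groups :: "'a::semigroup_mult itself \<Rightarrow> bool" where
  "union_of_groups _ \<longleftrightarrow> (\<forall>x::'a. \<exists>G. subgroup_of_sg G \<and> x \<in> G)"

end

theory Submission
  imports Defs
begin

primrec pw :: "'a::semigroup_mult \<Rightarrow> nat \<Rightarrow> 'a" where
  "pw x 0 = x"
| "pw x (Suc n) = x * pw x n"

lemma pw_mult: "pw x i * pw x j = pw x (i + j + 1)"
  by (induction i) (simp_all add: mult.assoc)

lemma NS_mult_assoc: "NS_mult (NS_mult u v) w = NS_mult u (NS_mult v w)"
  by (simp add: NS_mult_def mult.assoc add.assoc)

section \<open>Part (iii) implies (i)\<close>

lemma period_fiber:
  assumes U: "union_of_groups TYPE('a::{semigroup_mult,finite})"
    and T: "subsemigroup_NS (T :: (nat \<times> 'a) set)"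
  shows "\<exists>q>0. \<forall>n. (n,s) \<in> T \<longrightarrow> (n+q,s) \<in> T"
proof (cases "\<exists>a. (a,s) \<in> T")
  case False then show ?thesis by (intro exI[of _ 1]) auto
next
  case True
  then obtain a where a: "(a,s) \<in> T" by auto
  have a1: "1 \<le> a" using a T unfolding subsemigroup_NS_def by auto
  from U obtain G where G: "subgroup_of_sg G" "s \<in> G" unfolding union_of_groups_def by auto
  then obtain e where e: "e \<in> G" "\<forall>g\<in>G. e * g = g \<and> g * e = g" "\<forall>g\<in>G. \<exists>h\<in>G. g * h = e \<and> h * g = e"
    and cl: "\<forall>x\<in>G. \<forall>y\<in>G. x*y \<in> G" unfolding subgroup_of_sg_def by blast
  have pwG: "pw s n \<in> G" for n by (induction n) (use G cl in auto)
  have pwT: "(Suc n * a, pw s n) \<in> T" for n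
  proof (induction n)
    case 0 then show ?case using a by simp
  next
    case (Suc n)
    have "NS_mult (a,s) (Suc n * a, pw s n) \<in> T" using T a Suc unfolding subsemigroup_NS_def by blast
    then show ?case by (simp add: NS_mult_def)
  qed
  obtain h where h: "h \<in> G" "h * s = e" using e G by blast
  have canc: "y = z" if "s * y = s * z" "y \<in> G" "z \<in> G" for y z
  proof -
    have "h * (s * y) = h * (s * z)" using that by simp
    then have "(h * s) * y = (h * s) * z" by (simp add: mult.assoc)
    then show ?thesis using h e that by simp
  qed
  have ninj: "\<not> inj (pw s)"
  proof
    assume "inj (pw s)"
    moreover have "finite (range (pw s))" by simp
    ultimately show False using finite_imageD[of "pw s" UNIV] by auto
  qed
  have desc: "pw s 0 = pw s m" if "pw s i = pw s (i + m)" for i m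
    using that
  proof (induction i)
    case 0 then show ?case by simp
  next
    case (Suc i)
    then have "s * pw s i = s * pw s (i + m)" by simp
    then have "pw s i = pw s (i+m)" using canc pwG by blast
    then show ?case using Suc.IH by blast
  qed
  obtain i j where ij: "i < j" "pw s i = pw s j"
    using ninj unfolding inj_def by (metis linorder_neqE_nat)
  then obtain d where "j = Suc (i + d)" using less_imp_Suc_add by blast
  then have "pw s i = pw s (i + Suc d)" using ij by simp
  then have "pw s 0 = pw s (Suc d)" using desc by blast
  then have eq: "s * pw s d = s" by simp
  show ?thesis
  proof (intro exI[of _ "Suc d * a"] conjI allI impI)
    show "0 < Suc d * a" using a1 by simp
    fix n assume "(n,s) \<in> T"
    then have "NS_mult (n,s) (Suc d * a, pw s d) \<in> T" using T pwT unfolding subsemigroup_NS_def by blast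
    then show "(n + Suc d * a, s) \<in> T" using eq by (simp add: NS_mult_def)
  qed
qed

lemma common_period:
  assumes U: "union_of_groups TYPE('a::{semigroup_mult,finite})"
    and T: "subsemigroup_NS (T :: (nat \<times> 'a) set)"
  shows "\<exists>p>0. \<forall>n s c. (n,s) \<in> T \<longrightarrow> (n + c * p,s) \<in> T"
proof -
  have "\<forall>s. \<exists>q. q > 0 \<and> (\<forall>n. (n,s) \<in> T \<longrightarrow> (n+q,s) \<in> T)" using period_fiber[OF U T] by blast
  then obtain q where q: "\<And>s. q s > 0" "\<And>s n. (n,s) \<in> T \<Longrightarrow> (n + q s, s) \<in> T" by metis
  define p where "p = (\<Prod>s\<in>UNIV. q s)"
  have iter: "(n + c * q s, s) \<in> T" if "(n,s) \<in> T" for n c s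
  proof (induction c)
    case 0 then show ?case using that by simp
  next
    case (Suc c)
    then have "(n + c * q s + q s, s) \<in> T" using q by blast
    then show ?case by (simp add: algebra_simps)
  qed
  have "p > 0" unfolding p_def using q by (simp add: prod_pos)
  moreover have "(n + c * p, s) \<in> T" if "(n,s) \<in> T" for n s c
  proof -
    have "q s dvd p" unfolding p_def by auto
    then obtain k where "p = q s * k" by blast
    then have "n + c * p = n + (c * k) * q s" by simp
    then show ?thesis using iter that by metis
  qed
  ultimately show ?thesis by blast
qed

definition recon :: "nat \<Rightarrow> (nat \<times> 'a) set \<Rightarrow> (nat \<times> 'a) set" where
  "recon p F = {(n,s). \<exists>b. (b,s) \<in> F \<and> b \<le> n \<and> p dvd (n - b)}"

lemma recon_exists:
  assumes U: "union_of_groups TYPE('a::{semigroup_mult,finite})"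
    and T: "subsemigroup_NS (T :: (nat \<times> 'a) set)"
  shows "\<exists>p N. T = recon p (T \<inter> {u. fst u \<le> N})"
proof -
  obtain p where p: "p > 0" "\<And>n s c. (n,s) \<in> T \<Longrightarrow> (n + c * p,s) \<in> T"
    using common_period[OF U T] by blast
  define L where "L r s = (LEAST m. (m,s) \<in> T \<and> m mod p = r)" for r s
  define M where "M = (\<lambda>(r,s). L r s) ` ({..<p} \<times> UNIV)"
  have "finite M" unfolding M_def by simp
  then obtain N where N0: "\<forall>m\<in>M. m \<le> N" using finite_nat_set_iff_bounded_le by auto
  then have N: "\<And>m. m \<in> M \<Longrightarrow> m \<le> N" by blast
  have "T = recon p (T \<inter> {u. fst u \<le> N})"
  proof
    show "T \<subseteq> recon p (T \<inter> {u. fst u \<le> N})"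
    proof
      fix u assume "u \<in> T"
      then obtain n s where u: "u = (n,s)" "(n,s) \<in> T" by (cases u) auto
      define b where "b = L (n mod p) s"
      have b1: "(b,s) \<in> T \<and> b mod p = n mod p" unfolding b_def L_def
        by (rule LeastI[of _ n]) (use u in auto)
      have b2: "b \<le> n" unfolding b_def L_def by (rule Least_le) (use u in auto)
      have "b \<in> M" unfolding M_def b_def by (rule image_eqI[of _ _ "(n mod p, s)"]) (use p in auto)
      then have "b \<le> N" using N by blast
      moreover have "p dvd n - b" using mod_eq_dvd_iff_nat[OF b2, of p] b1 by (metis)
      ultimately show "u \<in> recon p (T \<inter> {u. fst u \<le> N})" unfolding recon_def using u b1 b2 by auto
    qed
  next
    show "recon p (T \<inter> {u. fst u \<le> N}) \<subseteq> T"
    proof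
      fix u assume "u \<in> recon p (T \<inter> {u. fst u \<le> N})"
      then obtain n s b where u: "u = (n,s)" "(b,s) \<in> T" "b \<le> n" "p dvd n - b"
        unfolding recon_def by auto
      then obtain c where "n - b = p * c" by blast
      then have "n = b + c * p" using u(3) by (metis le_add_diff_inverse mult.commute)
      then have "(n,s) \<in> T" using p(2)[OF u(2), of c] by simp
      then show "u \<in> T" using u(1) by simp
    qed
  qed
  then show ?thesis by blast
qed

lemma count_i:
  assumes U: "union_of_groups TYPE('a::{semigroup_mult,finite})"
  shows "countable {T :: (nat \<times> 'a) set. subsemigroup_NS T}"
proof -
  have "{T :: (nat \<times> 'a) set. subsemigroup_NS T} \<subseteq> (\<lambda>(p,F). recon p F) ` (UNIV \<times> {F. finite F})"
  proof
    fix T :: "(nat \<times> 'a) set" assume "T \<in> {T. subsemigroup_NS T}"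
    then obtain p N where e: "T = recon p (T \<inter> {u. fst u \<le> N})" using recon_exists[OF U] by blast
    have "T \<inter> {u. fst u \<le> N} \<subseteq> {..N} \<times> UNIV" by auto
    then have "finite (T \<inter> {u. fst u \<le> N})" by (rule finite_subset) simp
    then show "T \<in> (\<lambda>(p,F). recon p F) ` (UNIV \<times> {F. finite F})" using e by blast
  qed
  moreover have "countable ((UNIV :: nat set) \<times> {F :: (nat \<times> 'a) set. finite F})"
    by (rule countable_SIGMA) (simp_all add: countable_Collect_finite countableI_type)
  ultimately show ?thesis by (metis countable_image countable_subset)
qed


section \<open>Elements not in a subgroup\<close>

lemma cyc_group:
  fixes x :: "'a::semigroup_mult"
  assumes k: "pw x (Suc k) = x"
  shows "subgroup_of_sg (range (pw x))"
proof -
  have per: "pw x (j + Suc k) = pw x j" for j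
  proof (induction j)
    case 0 then show ?case using k by simp
  next
    case (Suc j) then show ?case by simp
  qed
  have perm: "pw x (j + m * Suc k) = pw x j" for j m
  proof (induction m)
    case 0 then show ?case by simp
  next
    case (Suc m)
    have "j + Suc m * Suc k = (j + m * Suc k) + Suc k" by simp
    then show ?case using per Suc by metis
  qed
  have id1: "pw x k * pw x j = pw x j" for j
    using per[of j] by (simp add: pw_mult add.commute)
  have id2: "pw x j * pw x k = pw x j" for j
    using per[of j] by (simp add: pw_mult)
  have inv: "pw x i * pw x (k * (i+2)) = pw x k \<and> pw x (k * (i+2)) * pw x i = pw x k" for i
  proof -
    have e1: "i + k * (i+2) + 1 = k + (i+1) * Suc k" by (simp add: algebra_simps)
    have e2: "k * (i+2) + i + 1 = k + (i+1) * Suc k" by (simp add: algebra_simps)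
    have "pw x i * pw x (k * (i+2)) = pw x k"
      unfolding pw_mult e1 by (rule perm)
    moreover have "pw x (k * (i+2)) * pw x i = pw x k"
      unfolding pw_mult e2 by (rule perm)
    ultimately show ?thesis by blast
  qed
  have c: "\<forall>a\<in>range (pw x). \<forall>b\<in>range (pw x). a * b \<in> range (pw x)"
  proof (intro ballI)
    fix a b assume "a \<in> range (pw x)" "b \<in> range (pw x)"
    then obtain i j where ij: "a = pw x i" "b = pw x j" by blast
    have "a * b = pw x (i + j + 1)" unfolding ij by (rule pw_mult)
    then show "a * b \<in> range (pw x)" by (simp only: rangeI)
  qed
  have e: "\<forall>g\<in>range (pw x). pw x k * g = g \<and> g * pw x k = g" using id1 id2 by auto
  have iv: "\<forall>g\<in>range (pw x). \<exists>h\<in>range (pw x). g * h = pw x k \<and> h * g = pw x k"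
  proof
    fix g assume "g \<in> range (pw x)"
    then obtain i where "g = pw x i" by blast
    then show "\<exists>h\<in>range (pw x). g * h = pw x k \<and> h * g = pw x k"
      using inv[of i] by blast
  qed
  have "pw x k \<in> range (pw x)" by (rule rangeI)
  then show ?thesis unfolding subgroup_of_sg_def using c e iv by blast
qed

lemma not_union:
  assumes "\<not> union_of_groups TYPE('a::semigroup_mult)"
  shows "\<exists>x::'a. \<forall>j. pw x (Suc j) \<noteq> x"
proof -
  from assms obtain x :: 'a where x: "\<forall>G. subgroup_of_sg G \<longrightarrow> x \<notin> G"
    unfolding union_of_groups_def by blast
  have "pw x (Suc j) \<noteq> x" for j
  proof
    assume "pw x (Suc j) = x"
    then have "subgroup_of_sg (range (pw x))" by (rule cyc_group)
    moreover have "x \<in> range (pw x)" by (metis pw.simps(1) rangeI)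
    ultimately show False using x by blast
  qed
  then show ?thesis by blast
qed

section \<open>Generated subsemigroups\<close>

inductive_set gen :: "'a::semigroup_mult \<Rightarrow> nat set \<Rightarrow> (nat \<times> 'a) set" for x A where
  atom: "n \<in> A \<Longrightarrow> (n, x) \<in> gen x A"
| step: "n \<in> A \<Longrightarrow> u \<in> gen x A \<Longrightarrow> NS_mult (n,x) u \<in> gen x A"

lemma gen_snd: "u \<in> gen x A \<Longrightarrow> \<exists>j. snd u = pw x j"
proof (induction rule: gen.induct)
  case (atom n) then show ?case by (metis pw.simps(1) snd_conv)
next
  case (step n u) then show ?case by (metis NS_mult_def pw.simps(2) snd_conv fst_conv)
qed

lemma gen_fst: "u \<in> gen x A \<Longrightarrow> 0 \<notin> A \<Longrightarrow> 1 \<le> fst u"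
proof (induction rule: gen.induct)
  case (atom n) then show ?case by (cases n) auto
next
  case (step n u) then show ?case by (simp add: NS_mult_def)
qed

lemma gen_closed: "u \<in> gen x A \<Longrightarrow> v \<in> gen x A \<Longrightarrow> NS_mult u v \<in> gen x A"
proof (induction rule: gen.induct)
  case (atom n) then show ?case by (simp add: gen.step)
next
  case (step n u) then show ?case by (simp add: NS_mult_assoc gen.step)
qed

lemma gen_sub: "A \<noteq> {} \<Longrightarrow> 0 \<notin> A \<Longrightarrow> subsemigroup_NS (gen x A)"
  unfolding subsemigroup_NS_def using gen_fst gen_closed gen.atom by blast

definition is_atom :: "(nat \<times> 'a::semigroup_mult) set \<Rightarrow> nat \<times> 'a \<Rightarrow> bool" where
  "is_atom T u \<longleftrightarrow> u \<in> T \<and> \<not> (\<exists>v\<in>T. \<exists>w\<in>T. u = NS_mult v w)"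

lemma gen_atoms:
  assumes nx: "\<forall>j. pw x (Suc j) \<noteq> x"
  shows "is_atom (gen x A) u \<longleftrightarrow> (\<exists>n\<in>A. u = (n, x))"
proof
  assume "is_atom (gen x A) u"
  then have u: "u \<in> gen x A" "\<not> (\<exists>v\<in>gen x A. \<exists>w\<in>gen x A. u = NS_mult v w)"
    unfolding is_atom_def by auto
  from u(1) show "\<exists>n\<in>A. u = (n, x)"
  proof (cases rule: gen.cases)
    case (atom n) then show ?thesis by blast
  next
    case (step n u')
    then show ?thesis using u(2) gen.atom by blast
  qed
next
  assume "\<exists>n\<in>A. u = (n, x)"
  then obtain n where n: "n \<in> A" "u = (n,x)" by blast
  have "\<not> (\<exists>v\<in>gen x A. \<exists>w\<in>gen x A. u = NS_mult v w)"
  proof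
    assume "\<exists>v\<in>gen x A. \<exists>w\<in>gen x A. u = NS_mult v w"
    then obtain v w where vw: "v \<in> gen x A" "w \<in> gen x A" "u = NS_mult v w" by blast
    obtain i j where "snd v = pw x i" "snd w = pw x j" using gen_snd vw by metis
    then have "x = pw x (Suc (i + j))" using vw(3) n(2) by (simp add: NS_mult_def pw_mult)
    then show False using nx by metis
  qed
  then show "is_atom (gen x A) u" unfolding is_atom_def using n gen.atom by blast
qed

lemma iso_atom:
  assumes f: "bij_betw f T1 T2" "\<forall>a\<in>T1. \<forall>b\<in>T1. f (NS_mult a b) = NS_mult (f a) (f b)"
    and cl: "\<forall>a\<in>T1. \<forall>b\<in>T1. NS_mult a b \<in> T1"
    and u: "u \<in> T1"
  shows "is_atom T2 (f u) \<longleftrightarrow> is_atom T1 u"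
proof
  assume a: "is_atom T2 (f u)"
  show "is_atom T1 u" unfolding is_atom_def
  proof (intro conjI notI)
    show "u \<in> T1" by fact
    assume "\<exists>v\<in>T1. \<exists>w\<in>T1. u = NS_mult v w"
    then obtain v w where "v \<in> T1" "w \<in> T1" "u = NS_mult v w" by blast
    then have "f u = NS_mult (f v) (f w)" "f v \<in> T2" "f w \<in> T2"
      using f bij_betw_apply by fastforce+
    then show False using a unfolding is_atom_def by blast
  qed
next
  assume a: "is_atom T1 u"
  show "is_atom T2 (f u)" unfolding is_atom_def
  proof (intro conjI notI)
    show "f u \<in> T2" using u f bij_betw_apply by fastforce
    assume "\<exists>v\<in>T2. \<exists>w\<in>T2. f u = NS_mult v w"
    then obtain v w where vw: "v \<in> T2" "w \<in> T2" "f u = NS_mult v w" by blast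
    obtain v' where v': "v' \<in> T1" "f v' = v" using vw f(1) unfolding bij_betw_def by blast
    obtain w' where w': "w' \<in> T1" "f w' = w" using vw f(1) unfolding bij_betw_def by blast
    have "f (NS_mult v' w') = f u" using f(2) v' w' vw by simp
    then have "NS_mult v' w' = u" using f(1) cl v' w' u unfolding bij_betw_def inj_on_def by blast
    then show False using a v' w' unfolding is_atom_def by blast
  qed
qed

lemma iso_inv:
  assumes "iso_NS T1 T2" and cl: "\<forall>a\<in>T1. \<forall>b\<in>T1. NS_mult a b \<in> T1"
  shows "iso_NS T2 T1"
proof -
  from assms obtain f where f: "bij_betw f T1 T2" "\<forall>a\<in>T1. \<forall>b\<in>T1. f (NS_mult a b) = NS_mult (f a) (f b)"
    unfolding iso_NS_def by blast
  define g where "g = inv_into T1 f"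
  have g: "bij_betw g T2 T1" unfolding g_def using f(1) by (rule bij_betw_inv_into)
  have "g (NS_mult a b) = NS_mult (g a) (g b)" if "a \<in> T2" "b \<in> T2" for a b
  proof -
    have ga: "g a \<in> T1" "f (g a) = a" using g that f(1) unfolding g_def
      by (auto simp: bij_betw_apply bij_betw_inv_into_right)
    have gb: "g b \<in> T1" "f (g b) = b" using g that f(1) unfolding g_def
      by (auto simp: bij_betw_apply bij_betw_inv_into_right)
    have "f (NS_mult (g a) (g b)) = NS_mult a b" using f(2) ga gb by simp
    moreover have "NS_mult (g a) (g b) \<in> T1" using cl ga gb by blast
    ultimately show ?thesis unfolding g_def using f(1)
      by (metis bij_betw_imp_inj_on inv_into_f_f)
  qed
  then show ?thesis unfolding iso_NS_def using g by blast
qed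

lemma iso_trans:
  assumes "iso_NS T1 T2" "iso_NS T2 T3"
  shows "iso_NS T1 T3"
proof -
  from assms obtain f g where f: "bij_betw f T1 T2" "\<forall>a\<in>T1. \<forall>b\<in>T1. f (NS_mult a b) = NS_mult (f a) (f b)"
    and g: "bij_betw g T2 T3" "\<forall>a\<in>T2. \<forall>b\<in>T2. g (NS_mult a b) = NS_mult (g a) (g b)"
    unfolding iso_NS_def by blast
  have "bij_betw (g \<circ> f) T1 T3" using f g bij_betw_trans by blast
  moreover have "\<forall>a\<in>T1. \<forall>b\<in>T1. (g \<circ> f) (NS_mult a b) = NS_mult ((g \<circ> f) a) ((g \<circ> f) b)"
    using f g bij_betw_apply by fastforce
  ultimately show ?thesis unfolding iso_NS_def by blast
qed


section \<open>A rigid uncountable family\<close>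

fun E :: "nat \<Rightarrow> nat \<Rightarrow> nat \<Rightarrow> nat" where
  "E q r 0 = q"
| "E q r (Suc 0) = r"
| "E q r (Suc (Suc n)) = 2 * E q r (Suc n) - E q r n"

definition AX :: "nat set \<Rightarrow> nat set" where
  "AX X = {1} \<union> {2*n+2 | n. True} \<union> {2*n+3 | n. n \<in> X}"

definition gg :: "nat \<times> nat \<times> nat \<Rightarrow> nat \<Rightarrow> nat" where
  "gg t a = (case t of (p,q,r) \<Rightarrow> if a = 1 then p else if even a then E q r (a div 2 - 1)
      else E q r ((a - 1) div 2 - 1) + q - p)"

lemma AX_even': assumes "even a" "2 \<le> a" shows "a \<in> AX X"
proof -
  have "a = 2*(a div 2 - 1) + 2" using assms by auto
  then show ?thesis unfolding AX_def by blast
qed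
lemma AX_one: "1 \<in> AX X" unfolding AX_def by blast
lemma AX_odd: "n \<in> X \<Longrightarrow> 2*n+3 \<in> AX X" unfolding AX_def by blast
lemma AX_cases: "a \<in> AX X \<Longrightarrow> a = 1 \<or> (\<exists>n. a = 2*n+2) \<or> (\<exists>n\<in>X. a = 2*n+3)"
  unfolding AX_def by blast
lemma AX_odd_iff: "n \<in> X \<longleftrightarrow> 2*n+3 \<in> AX X"
proof
  assume "2*n+3 \<in> AX X"
  moreover have "\<forall>m. 2*n+3 \<noteq> 2*m+2" by presburger
  ultimately show "n \<in> X" unfolding AX_def by auto
qed (rule AX_odd)

lemma affine_det:
  assumes rel: "\<And>a b c d. a \<in> AX X \<Longrightarrow> b \<in> AX X \<Longrightarrow> c \<in> AX X \<Longrightarrow> d \<in> AX X \<Longrightarrow>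
      a + b = c + d \<Longrightarrow> \<phi> a + \<phi> b = \<phi> c + \<phi> d"
    and a: "a \<in> AX X"
  shows "\<phi> a = gg (\<phi> 1, \<phi> 2, \<phi> 4) a"
proof -
  have ev: "\<phi> (2*n+2) = E (\<phi> 2) (\<phi> 4) n \<and> \<phi> (2*n+4) = E (\<phi> 2) (\<phi> 4) (Suc n)" for n
  proof (induction n)
    case 0 then show ?case by (simp only: mult_0_right add_0 E.simps(1) E.simps(2))
  next
    case (Suc n)
    have e1: "2 * Suc n + 2 = 2*n+4" "2 * Suc n + 4 = 2*n+6" by simp_all
    have m: "2*n+6 \<in> AX X" "2*n+2 \<in> AX X" "2*n+4 \<in> AX X" by (rule AX_even'; simp)+
    have "\<phi> (2*n+6) + \<phi> (2*n+2) = \<phi> (2*n+4) + \<phi> (2*n+4)"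
      by (rule rel[OF m(1) m(2) m(3) m(3)]) simp
    then show ?case unfolding e1 using Suc by simp
  qed
  from AX_cases[OF a] show ?thesis
  proof (elim disjE exE bexE)
    assume "a = 1" then show ?thesis by (simp add: gg_def)
  next
    fix n assume an: "a = 2*n+2"
    have "gg (\<phi> 1, \<phi> 2, \<phi> 4) a = E (\<phi> 2) (\<phi> 4) n" unfolding an gg_def by simp
    then show ?thesis using ev[of n] an by simp
  next
    fix n assume n: "n \<in> X" and an: "a = 2*n+3"
    have "\<phi> (2*n+3) + \<phi> 1 = \<phi> (2*n+2) + \<phi> 2"
      by (rule rel[OF AX_odd[OF n] AX_one]) ((rule AX_even'; simp)+, simp)
    then have "\<phi> (2*n+3) + \<phi> 1 = E (\<phi> 2) (\<phi> 4) n + \<phi> 2" using ev[of n] by simp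
    moreover have "gg (\<phi> 1, \<phi> 2, \<phi> 4) a = E (\<phi> 2) (\<phi> 4) n + \<phi> 2 - \<phi> 1" unfolding an gg_def by simp
    ultimately show ?thesis using an by simp
  qed
qed

lemma AX_zero: "0 \<notin> AX X" unfolding AX_def by auto

lemma rigid:
  assumes nx: "\<forall>j. pw x (Suc j) \<noteq> x" and iso: "iso_NS (gen x (AX X)) (gen x B)"
  shows "B \<in> range (\<lambda>t. gg t ` AX X)"
proof -
  let ?A = "AX X"
  obtain f where f: "bij_betw f (gen x ?A) (gen x B)"
    "\<forall>a\<in>gen x ?A. \<forall>b\<in>gen x ?A. f (NS_mult a b) = NS_mult (f a) (f b)"
    using iso unfolding iso_NS_def by blast
  have cl: "\<forall>a\<in>gen x ?A. \<forall>b\<in>gen x ?A. NS_mult a b \<in> gen x ?A" using gen_closed by blast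
  define \<phi> where "\<phi> n = fst (f (n,x))" for n
  have fa: "f (n,x) = (\<phi> n, x) \<and> \<phi> n \<in> B" if n: "n \<in> ?A" for n
  proof -
    have "(n,x) \<in> gen x ?A" using n by (rule gen.atom)
    moreover have "is_atom (gen x ?A) (n,x)" using gen_atoms[OF nx] n by blast
    ultimately have "is_atom (gen x B) (f (n,x))" using iso_atom[OF f cl] by blast
    then obtain m where "m \<in> B" "f (n,x) = (m,x)" using gen_atoms[OF nx] by blast
    then show ?thesis unfolding \<phi>_def by simp
  qed
  have Bsub: "B \<subseteq> \<phi> ` ?A"
  proof
    fix b assume b: "b \<in> B"
    then have "(b,x) \<in> gen x B" by (rule gen.atom)
    then obtain u where u: "u \<in> gen x ?A" "f u = (b,x)" using f(1) unfolding bij_betw_def by force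
    have "is_atom (gen x B) (f u)" using gen_atoms[OF nx] b u by blast
    then have "is_atom (gen x ?A) u" using iso_atom[OF f cl u(1)] by blast
    then obtain n where n: "n \<in> ?A" "u = (n,x)" using gen_atoms[OF nx] by blast
    then show "b \<in> \<phi> ` ?A" using fa[OF n(1)] u by auto
  qed
  have Bsup: "\<phi> ` ?A \<subseteq> B" using fa by blast
  have rel: "\<phi> a + \<phi> b = \<phi> c + \<phi> d"
    if "a \<in> ?A" "b \<in> ?A" "c \<in> ?A" "d \<in> ?A" "a + b = c + d" for a b c d
  proof -
    have m: "(a,x) \<in> gen x ?A" "(b,x) \<in> gen x ?A" "(c,x) \<in> gen x ?A" "(d,x) \<in> gen x ?A"
      using that by (simp_all add: gen.atom)
    have "NS_mult (a,x) (b,x) = NS_mult (c,x) (d,x)" using that(5) by (simp add: NS_mult_def)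
    then have "f (NS_mult (a,x) (b,x)) = f (NS_mult (c,x) (d,x))" by simp
    then have "NS_mult (f (a,x)) (f (b,x)) = NS_mult (f (c,x)) (f (d,x))" using f(2) m by simp
    then show ?thesis using fa that by (simp add: NS_mult_def)
  qed
  have "\<forall>a\<in>?A. \<phi> a = gg (\<phi> 1, \<phi> 2, \<phi> 4) a" using affine_det[of X \<phi>] rel by blast
  then have "\<phi> ` ?A = gg (\<phi> 1, \<phi> 2, \<phi> 4) ` ?A" by (intro image_cong) auto
  moreover have "B = \<phi> ` ?A" using Bsub Bsup by (rule subset_antisym)
  ultimately have "B = gg (\<phi> 1, \<phi> 2, \<phi> 4) ` ?A" by simp
  then show ?thesis by blast
qed

lemma uncount_AX: "\<not> countable (range AX)"
proof
  assume c: "countable (range AX)"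
  have "inj AX"
  proof (rule injI)
    fix X Y assume "AX X = AX Y"
    then show "X = Y" using AX_odd_iff by blast
  qed
  then have "countable (UNIV :: nat set set)" using countable_image_inj_on[OF c] by simp
  then obtain g :: "nat \<Rightarrow> nat set" where g: "range g = UNIV"
    by (metis UNIV_not_empty uncountable_def)
  have "{m. m \<notin> g m} \<in> range g" using g by simp
  then obtain n where "{m. m \<notin> g m} = g n" by blast
  then have "n \<in> g n \<longleftrightarrow> n \<notin> g n" by (metis mem_Collect_eq)
  then show False by blast
qed

lemma ii_iii:
  assumes C: "countable (C :: (nat \<times> 'a::semigroup_mult) set set)" "C \<subseteq> {T. subsemigroup_NS T}"
    "\<forall>T. subsemigroup_NS T \<longrightarrow> (\<exists>T'\<in>C. iso_NS T T')"
  shows "union_of_groups TYPE('a)"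
proof (rule ccontr)
  assume "\<not> union_of_groups TYPE('a)"
  then obtain x :: 'a where nx: "\<forall>j. pw x (Suc j) \<noteq> x" using not_union by blast
  define K where "K T' = {A \<in> range AX. iso_NS (gen x A) T'}" for T'
  have sub: "range AX \<subseteq> (\<Union>T'\<in>C. K T')"
  proof
    fix A assume A: "A \<in> range AX"
    then have "subsemigroup_NS (gen x A)" using gen_sub AX_one AX_zero by blast
    then obtain T' where "T' \<in> C" "iso_NS (gen x A) T'" using C(3) by blast
    then show "A \<in> (\<Union>T'\<in>C. K T')" unfolding K_def using A by blast
  qed
  have "countable (K T')" for T'
  proof (cases "K T' = {}")
    case True then show ?thesis by simp
  next
    case False
    then obtain A0 where A0: "A0 \<in> range AX" "iso_NS (gen x A0) T'" unfolding K_def by blast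
    then obtain X0 where X0: "A0 = AX X0" by blast
    have "K T' \<subseteq> range (\<lambda>t. gg t ` AX X0)"
    proof
      fix A assume "A \<in> K T'"
      then have A: "iso_NS (gen x A) T'" unfolding K_def by blast
      have "iso_NS T' (gen x A)" using iso_inv[OF A] gen_closed by blast
      then have "iso_NS (gen x (AX X0)) (gen x A)" using iso_trans A0(2) X0 by blast
      then show "A \<in> range (\<lambda>t. gg t ` AX X0)" using rigid[OF nx] by blast
    qed
    moreover have "countable (range (\<lambda>t. gg t ` AX X0))" by (rule countable_image) simp
    ultimately show ?thesis using countable_subset by blast
  qed
  then have "countable (\<Union>T'\<in>C. K T')" using C(1) by (intro countable_UN) auto
  then have "countable (range AX)" using sub countable_subset by blast
  then show False using uncount_AX by blast
qed

lemma iso_refl: "iso_NS T T"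
  unfolding iso_NS_def by (intro exI[of _ id]) (simp add: bij_betw_id)

theorem theoremD:
  shows "(countable {T :: (nat \<times> 'a::{semigroup_mult,finite}) set. subsemigroup_NS T}
            \<longleftrightarrow> (\<exists>C. countable C \<and> C \<subseteq> {T :: (nat \<times> 'a) set. subsemigroup_NS T} \<and>
                    (\<forall>T. subsemigroup_NS T \<longrightarrow> (\<exists>T'\<in>C. iso_NS T T'))))
       \<and> ((\<exists>C. countable C \<and> C \<subseteq> {T :: (nat \<times> 'a) set. subsemigroup_NS T} \<and>
                    (\<forall>T. subsemigroup_NS T \<longrightarrow> (\<exists>T'\<in>C. iso_NS T T')))
            \<longleftrightarrow> union_of_groups TYPE('a))"
proof -
  have i_ii: "\<exists>C. countable C \<and> C \<subseteq> {T :: (nat \<times> 'a) set. subsemigroup_NS T} \<and>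
                    (\<forall>T. subsemigroup_NS T \<longrightarrow> (\<exists>T'\<in>C. iso_NS T T'))"
    if "countable {T :: (nat \<times> 'a) set. subsemigroup_NS T}"
    using that iso_refl by (intro exI[of _ "{T :: (nat \<times> 'a) set. subsemigroup_NS T}"]) auto
  have ii_iii': "union_of_groups TYPE('a)"
    if "\<exists>C. countable C \<and> C \<subseteq> {T :: (nat \<times> 'a) set. subsemigroup_NS T} \<and>
                    (\<forall>T. subsemigroup_NS T \<longrightarrow> (\<exists>T'\<in>C. iso_NS T T'))"
    using that ii_iii by blast
  have iii_i: "countable {T :: (nat \<times> 'a) set. subsemigroup_NS T}" if "union_of_groups TYPE('a)"
    using count_i[OF that] .
  show ?thesis using i_ii ii_iii' iii_i by blast
qed

end
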